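(* Let $F$ be the graph with vertex set $\{a,b,c,d,e,g,h,i,x,x'\}$ and edge set $\{de,\ da,\ ae,\ dc,\ ec,\ ac,\ eg,\ cg,\ db,\ ab,\ cb,\ gb,\ ex',\ bx',\ di,\ ix,\ ah,\ hx\}$. Then $F$ has an acyclic $(\mathcal{S}_3,\mathcal{S}_3)$-colouring, and in every acyclic $(\mathcal{S}_3,\mathcal{S}_3)$-colouring $f$ of $F$ we have $f(x)=f(x')$, the vertex $x$ has exactly two neighbours coloured $f(x)$, and the vertex $x'$ has exactly one neighbour coloured $f(x')$.
   Context: An acyclic $(\mathcal{S}_3,\mathcal{S}_3)$-colouring of a graph $G$ is a map $c:V(G)\to\{1,2\}$ (not necessarily proper) such that each of the two colour classes induces a subgraph of maximum degree at most $3$, and there is no cycle in $G$ every edge of which joins a vertex of colour $1$ to a vertex of colour $2$. *)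

theory Defs
  imports Main
begin

text \<open>A simple graph is given by a finite vertex set V and a symmetric,
irreflexive adjacency relation adj on V. A 2-colouring is a map into {1,2}.\<close>

definition colour_map :: "'a set \<Rightarrow> ('a \<Rightarrow> nat) \<Rightarrow> bool" where
  "colour_map V c \<longleftrightarrow> (\<forall>v\<in>V. c v \<in> {1, 2})"

definition same_colour_deg :: "'a set \<Rightarrow> ('a \<Rightarrow> 'a \<Rightarrow> bool) \<Rightarrow> ('a \<Rightarrow> nat) \<Rightarrow> 'a \<Rightarrow> nat" where
  "same_colour_deg V adj c v = card {w \<in> V. adj v w \<and> c w = c v}"

definition is_cycle :: "'a set \<Rightarrow> ('a \<Rightarrow> 'a \<Rightarrow> bool) \<Rightarrow> 'a list \<Rightarrow> bool" where
  "is_cycle V adj vs \<longleftrightarrow> length vs \<ge> 3 \<and> distinct vs \<and> set vs \<subseteq> V \<and>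
     (\<forall>i < length vs. adj (vs ! i) (vs ! ((i + 1) mod length vs)))"

definition bichromatic_cycle :: "'a set \<Rightarrow> ('a \<Rightarrow> 'a \<Rightarrow> bool) \<Rightarrow> ('a \<Rightarrow> nat) \<Rightarrow> 'a list \<Rightarrow> bool" where
  "bichromatic_cycle V adj c vs \<longleftrightarrow> is_cycle V adj vs \<and>
     (\<forall>i < length vs. c (vs ! i) \<noteq> c (vs ! ((i + 1) mod length vs)))"

definition acyclic_S3S3_colouring :: "'a set \<Rightarrow> ('a \<Rightarrow> 'a \<Rightarrow> bool) \<Rightarrow> ('a \<Rightarrow> nat) \<Rightarrow> bool" where
  "acyclic_S3S3_colouring V adj c \<longleftrightarrow> colour_map V c \<and>
     (\<forall>v\<in>V. same_colour_deg V adj c v \<le> 3) \<and>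
     \<not> (\<exists>vs. bichromatic_cycle V adj c vs)"

datatype vtx = Va | Vb | Vc | Vd | Ve | Vg | Vh | Vi | Vx | Vx'

definition F_edges :: "(vtx \<times> vtx) set" where
  "F_edges = {(Vd,Ve), (Vd,Va), (Va,Ve), (Vd,Vc), (Ve,Vc), (Va,Vc), (Ve,Vg), (Vc,Vg),
              (Vd,Vb), (Va,Vb), (Vc,Vb), (Vg,Vb), (Ve,Vx'), (Vb,Vx'), (Vd,Vi), (Vi,Vx),
              (Va,Vh), (Vh,Vx)}"

definition F_adj :: "vtx \<Rightarrow> vtx \<Rightarrow> bool" where
  "F_adj u v \<longleftrightarrow> (u, v) \<in> F_edges \<or> (v, u) \<in> F_edges"

definition F_V :: "vtx set" where
  "F_V = {Va, Vb, Vc, Vd, Ve, Vg, Vh, Vi, Vx, Vx'}"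

end

theory Submission
  imports Defs
begin

lemma cyc4:
  assumes cy: "is_cycle V adj [a,b,c,d]" and nb: "\<not> bichromatic_cycle V adj f [a,b,c,d]"
  shows "f a = f b \<or> f b = f c \<or> f c = f d \<or> f d = f a"
proof (rule ccontr)
  assume H: "\<not> (f a = f b \<or> f b = f c \<or> f c = f d \<or> f d = f a)"
  have "\<forall>i < length [a,b,c,d]. f ([a,b,c,d] ! i) \<noteq> f ([a,b,c,d] ! ((i + 1) mod length [a,b,c,d]))"
  proof (intro allI impI)
    fix i assume "i < length [a,b,c,d]"
    then have "i = 0 \<or> i = 1 \<or> i = 2 \<or> i = 3" by auto
    then show "f ([a,b,c,d] ! i) \<noteq> f ([a,b,c,d] ! ((i + 1) mod length [a,b,c,d]))"
      using H by (elim disjE) simp_all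
  qed
  then have "bichromatic_cycle V adj f [a,b,c,d]" using cy unfolding bichromatic_cycle_def by blast
  then show False using nb by blast
qed

lemma cyc6:
  assumes cy: "is_cycle V adj [a,b,c,d,e,h]" and nb: "\<not> bichromatic_cycle V adj f [a,b,c,d,e,h]"
  shows "f a = f b \<or> f b = f c \<or> f c = f d \<or> f d = f e \<or> f e = f h \<or> f h = f a"
proof (rule ccontr)
  assume H: "\<not> (f a = f b \<or> f b = f c \<or> f c = f d \<or> f d = f e \<or> f e = f h \<or> f h = f a)"
  have "\<forall>i < length [a,b,c,d,e,h]. f ([a,b,c,d,e,h] ! i) \<noteq> f ([a,b,c,d,e,h] ! ((i + 1) mod length [a,b,c,d,e,h]))"
  proof (intro allI impI)
    fix i assume "i < length [a,b,c,d,e,h]"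
    then have "i = 0 \<or> i = 1 \<or> i = 2 \<or> i = 3 \<or> i = 4 \<or> i = 5" by auto
    then show "f ([a,b,c,d,e,h] ! i) \<noteq> f ([a,b,c,d,e,h] ! ((i + 1) mod length [a,b,c,d,e,h]))"
      using H by (elim disjE) simp_all
  qed
  then have "bichromatic_cycle V adj f [a,b,c,d,e,h]" using cy unfolding bichromatic_cycle_def by blast
  then show False using nb by blast
qed

lemma iscyc4:
  assumes "distinct [a,b,c,d]" "set [a,b,c,d] \<subseteq> V" "adj a b" "adj b c" "adj c d" "adj d a"
  shows "is_cycle V adj [a,b,c,d]"
  unfolding is_cycle_def
proof (intro conjI allI impI)
  fix i assume "i < length [a,b,c,d]"
  then have "i = 0 \<or> i = 1 \<or> i = 2 \<or> i = 3" by auto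
  then show "adj ([a,b,c,d] ! i) ([a,b,c,d] ! ((i + 1) mod length [a,b,c,d]))"
    using assms by (elim disjE) simp_all
qed (use assms in simp_all)

lemma iscyc6:
  assumes "distinct [a,b,c,d,e,h]" "set [a,b,c,d,e,h] \<subseteq> V" "adj a b" "adj b c" "adj c d" "adj d e" "adj e h" "adj h a"
  shows "is_cycle V adj [a,b,c,d,e,h]"
  unfolding is_cycle_def
proof (intro conjI allI impI)
  fix i assume "i < length [a,b,c,d,e,h]"
  then have "i = 0 \<or> i = 1 \<or> i = 2 \<or> i = 3 \<or> i = 4 \<or> i = 5" by auto
  then show "adj ([a,b,c,d,e,h] ! i) ([a,b,c,d,e,h] ! ((i + 1) mod length [a,b,c,d,e,h]))"
    using assms by (elim disjE) simp_all
qed (use assms in simp_all)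

lemma inV: "v \<in> F_V" by (cases v) (auto simp: F_V_def)

lemma finV: "finite F_V" by (simp add: F_V_def)

lemma deg4:
  assumes "same_colour_deg F_V F_adj f v \<le> 3" "distinct [w1,w2,w3,w4]"
    "F_adj v w1" "F_adj v w2" "F_adj v w3" "F_adj v w4"
  shows "\<not> (f w1 = f v \<and> f w2 = f v \<and> f w3 = f v \<and> f w4 = f v)"
proof
  assume h: "f w1 = f v \<and> f w2 = f v \<and> f w3 = f v \<and> f w4 = f v"
  have "{w1,w2,w3,w4} \<subseteq> {w \<in> F_V. F_adj v w \<and> f w = f v}" using h assms inV by auto
  then have "card {w1,w2,w3,w4} \<le> same_colour_deg F_V F_adj f v"
    unfolding same_colour_deg_def by (rule card_mono[rotated]) (simp add: finV)
  moreover have "card {w1,w2,w3,w4} = 4" using assms(2) by simp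
  ultimately show False using assms(1) by simp
qed

lemma cyc_nbrs:
  assumes bc: "bichromatic_cycle V adj c vs" and sym: "\<And>x y. adj x y \<Longrightarrow> adj y x"
    and v: "v \<in> set vs"
  shows "\<exists>u w. u \<noteq> w \<and> u \<in> set vs \<and> w \<in> set vs \<and> adj v u \<and> adj v w \<and> c u \<noteq> c v \<and> c w \<noteq> c v"
proof -
  define n where "n = length vs"
  have n3: "n \<ge> 3" and dist: "distinct vs"
    and ad: "\<forall>i<n. adj (vs ! i) (vs ! ((i + 1) mod n))"
    and cd: "\<forall>i<n. c (vs ! i) \<noteq> c (vs ! ((i + 1) mod n))"
    using bc unfolding bichromatic_cycle_def is_cycle_def n_def by blast+
  obtain i where i: "i < n" "vs ! i = v" using v unfolding n_def by (metis in_set_conv_nth)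
  define j where "j = (if i = 0 then n - 1 else i - 1)"
  define k where "k = (i + 1) mod n"
  have jn: "j < n" using i n3 unfolding j_def by auto
  have kn: "k < n" using n3 unfolding k_def by simp
  have j1: "(j + 1) mod n = i"
  proof (cases "i = 0")
    case True
    then have "j + 1 = n" using n3 unfolding j_def by simp
    then show ?thesis using True by simp
  next
    case False
    then have "j + 1 = i" unfolding j_def by simp
    then show ?thesis using i(1) by simp
  qed
  have kj: "k \<noteq> j"
  proof (cases "i + 1 = n")
    case True
    then have "k = 0" unfolding k_def by simp
    moreover have "j = n - 2" using True n3 unfolding j_def by simp
    ultimately show ?thesis using n3 by simp
  next
    case False
    then have "i + 1 < n" using i(1) by simp
    then have "k = i + 1" unfolding k_def by simp
    then show ?thesis using False i(1) n3 unfolding j_def by (cases "i = 0") auto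
  qed
  have "vs ! k \<noteq> vs ! j" using kj jn kn dist unfolding n_def by (simp add: nth_eq_iff_index_eq)
  moreover have "vs ! k \<in> set vs" "vs ! j \<in> set vs" using jn kn unfolding n_def by simp_all
  moreover have "adj v (vs ! k)" "c (vs ! k) \<noteq> c v"
    using ad[rule_format, OF i(1)] cd[rule_format, OF i(1)] i(2) unfolding k_def by simp_all
  moreover have "adj (vs ! j) v" "c (vs ! j) \<noteq> c v"
    using ad[rule_format, OF jn] cd[rule_format, OF jn] i(2) unfolding j1 by simp_all
  ultimately show ?thesis using sym by blast
qed

lemma nbr_a: "F_adj Va u \<longleftrightarrow> u = Vb \<or> u = Vc \<or> u = Vd \<or> u = Ve \<or> u = Vh"
  by (cases u) (auto simp: F_adj_def F_edges_def)

lemma nbr_b: "F_adj Vb u \<longleftrightarrow> u = Vx' \<or> u = Va \<or> u = Vc \<or> u = Vd \<or> u = Vg"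
  by (cases u) (auto simp: F_adj_def F_edges_def)

lemma nbr_c: "F_adj Vc u \<longleftrightarrow> u = Va \<or> u = Vb \<or> u = Vd \<or> u = Ve \<or> u = Vg"
  by (cases u) (auto simp: F_adj_def F_edges_def)

lemma nbr_d: "F_adj Vd u \<longleftrightarrow> u = Va \<or> u = Vb \<or> u = Vc \<or> u = Ve \<or> u = Vi"
  by (cases u) (auto simp: F_adj_def F_edges_def)

lemma nbr_e: "F_adj Ve u \<longleftrightarrow> u = Vx' \<or> u = Va \<or> u = Vc \<or> u = Vd \<or> u = Vg"
  by (cases u) (auto simp: F_adj_def F_edges_def)

lemma nbr_g: "F_adj Vg u \<longleftrightarrow> u = Vb \<or> u = Vc \<or> u = Ve"
  by (cases u) (auto simp: F_adj_def F_edges_def)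

lemma nbr_h: "F_adj Vh u \<longleftrightarrow> u = Va \<or> u = Vx"
  by (cases u) (auto simp: F_adj_def F_edges_def)

lemma nbr_i: "F_adj Vi u \<longleftrightarrow> u = Vd \<or> u = Vx"
  by (cases u) (auto simp: F_adj_def F_edges_def)

lemma nbr_x: "F_adj Vx u \<longleftrightarrow> u = Vh \<or> u = Vi"
  by (cases u) (auto simp: F_adj_def F_edges_def)

lemma nbr_X2: "F_adj Vx' u \<longleftrightarrow> u = Vb \<or> u = Ve"
  by (cases u) (auto simp: F_adj_def F_edges_def)

lemma Fsym: "F_adj x y \<Longrightarrow> F_adj y x" by (auto simp: F_adj_def)

lemma existence: "\<exists>f. acyclic_S3S3_colouring F_V F_adj f"
proof
  define g :: "vtx \<Rightarrow> nat" where "g = (\<lambda>v. if v \<in> {Va,Vb,Vc,Vd} then 1 else 2)"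
  have cm: "colour_map F_V g" by (auto simp: colour_map_def g_def)
  have dg_a: "same_colour_deg F_V F_adj g Va \<le> 3"
  proof -
    have "{w \<in> F_V. F_adj Va w \<and> g w = g Va} = {Vb,Vc,Vd}"
      by (auto simp: g_def F_V_def nbr_a nbr_b nbr_c nbr_d nbr_e nbr_g nbr_h nbr_i nbr_x nbr_X2)
    then show ?thesis by (simp add: same_colour_deg_def)
  qed
  have dg_b: "same_colour_deg F_V F_adj g Vb \<le> 3"
  proof -
    have "{w \<in> F_V. F_adj Vb w \<and> g w = g Vb} = {Va,Vc,Vd}"
      by (auto simp: g_def F_V_def nbr_a nbr_b nbr_c nbr_d nbr_e nbr_g nbr_h nbr_i nbr_x nbr_X2)
    then show ?thesis by (simp add: same_colour_deg_def)
  qed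
  have dg_c: "same_colour_deg F_V F_adj g Vc \<le> 3"
  proof -
    have "{w \<in> F_V. F_adj Vc w \<and> g w = g Vc} = {Va,Vb,Vd}"
      by (auto simp: g_def F_V_def nbr_a nbr_b nbr_c nbr_d nbr_e nbr_g nbr_h nbr_i nbr_x nbr_X2)
    then show ?thesis by (simp add: same_colour_deg_def)
  qed
  have dg_d: "same_colour_deg F_V F_adj g Vd \<le> 3"
  proof -
    have "{w \<in> F_V. F_adj Vd w \<and> g w = g Vd} = {Va,Vb,Vc}"
      by (auto simp: g_def F_V_def nbr_a nbr_b nbr_c nbr_d nbr_e nbr_g nbr_h nbr_i nbr_x nbr_X2)
    then show ?thesis by (simp add: same_colour_deg_def)
  qed
  have dg_e: "same_colour_deg F_V F_adj g Ve \<le> 3"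
  proof -
    have "{w \<in> F_V. F_adj Ve w \<and> g w = g Ve} = {Vx',Vg}"
      by (auto simp: g_def F_V_def nbr_a nbr_b nbr_c nbr_d nbr_e nbr_g nbr_h nbr_i nbr_x nbr_X2)
    then show ?thesis by (simp add: same_colour_deg_def)
  qed
  have dg_g: "same_colour_deg F_V F_adj g Vg \<le> 3"
  proof -
    have "{w \<in> F_V. F_adj Vg w \<and> g w = g Vg} = {Ve}"
      by (auto simp: g_def F_V_def nbr_a nbr_b nbr_c nbr_d nbr_e nbr_g nbr_h nbr_i nbr_x nbr_X2)
    then show ?thesis by (simp add: same_colour_deg_def)
  qed
  have dg_h: "same_colour_deg F_V F_adj g Vh \<le> 3"
  proof -
    have "{w \<in> F_V. F_adj Vh w \<and> g w = g Vh} = {Vx}"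
      by (auto simp: g_def F_V_def nbr_a nbr_b nbr_c nbr_d nbr_e nbr_g nbr_h nbr_i nbr_x nbr_X2)
    then show ?thesis by (simp add: same_colour_deg_def)
  qed
  have dg_i: "same_colour_deg F_V F_adj g Vi \<le> 3"
  proof -
    have "{w \<in> F_V. F_adj Vi w \<and> g w = g Vi} = {Vx}"
      by (auto simp: g_def F_V_def nbr_a nbr_b nbr_c nbr_d nbr_e nbr_g nbr_h nbr_i nbr_x nbr_X2)
    then show ?thesis by (simp add: same_colour_deg_def)
  qed
  have dg_x: "same_colour_deg F_V F_adj g Vx \<le> 3"
  proof -
    have "{w \<in> F_V. F_adj Vx w \<and> g w = g Vx} = {Vh,Vi}"
      by (auto simp: g_def F_V_def nbr_a nbr_b nbr_c nbr_d nbr_e nbr_g nbr_h nbr_i nbr_x nbr_X2)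
    then show ?thesis by (simp add: same_colour_deg_def)
  qed
  have dg_X2: "same_colour_deg F_V F_adj g Vx' \<le> 3"
  proof -
    have "{w \<in> F_V. F_adj Vx' w \<and> g w = g Vx'} = {Ve}"
      by (auto simp: g_def F_V_def nbr_a nbr_b nbr_c nbr_d nbr_e nbr_g nbr_h nbr_i nbr_x nbr_X2)
    then show ?thesis by (simp add: same_colour_deg_def)
  qed
  have dgall: "\<forall>v\<in>F_V. same_colour_deg F_V F_adj g v \<le> 3"
    using dg_a dg_b dg_c dg_d dg_e dg_g dg_h dg_i dg_x dg_X2 by (auto simp: F_V_def)
  have ac: "\<not> (\<exists>vs. bichromatic_cycle F_V F_adj g vs)"
  proof
    assume "\<exists>vs. bichromatic_cycle F_V F_adj g vs"
    then obtain vs where bc: "bichromatic_cycle F_V F_adj g vs" by blast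
    have nbrs: "\<And>v. v \<in> set vs \<Longrightarrow> \<exists>u w. u \<noteq> w \<and> u \<in> set vs \<and> w \<in> set vs \<and> F_adj v u \<and> F_adj v w \<and> g u \<noteq> g v \<and> g w \<noteq> g v"
      by (rule cyc_nbrs[OF bc]) (auto simp: F_adj_def)
    have n_X2: "Vx' \<notin> set vs"
    proof
      assume "Vx' \<in> set vs"
      from nbrs[OF this] obtain u w where uw: "u \<noteq> w" and u: "u \<in> set vs" "F_adj Vx' u" "g u \<noteq> g Vx'" and w: "w \<in> set vs" "F_adj Vx' w" "g w \<noteq> g Vx'" by blast
      have "u = Vb" using u  by (auto simp: g_def nbr_a nbr_b nbr_c nbr_d nbr_e nbr_g nbr_h nbr_i nbr_x nbr_X2)
      moreover have "w = Vb" using w  by (auto simp: g_def nbr_a nbr_b nbr_c nbr_d nbr_e nbr_g nbr_h nbr_i nbr_x nbr_X2)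
      ultimately show False using uw by simp
    qed
    have n_h: "Vh \<notin> set vs"
    proof
      assume "Vh \<in> set vs"
      from nbrs[OF this] obtain u w where uw: "u \<noteq> w" and u: "u \<in> set vs" "F_adj Vh u" "g u \<noteq> g Vh" and w: "w \<in> set vs" "F_adj Vh w" "g w \<noteq> g Vh" by blast
      have "u = Va" using u n_X2 by (auto simp: g_def nbr_a nbr_b nbr_c nbr_d nbr_e nbr_g nbr_h nbr_i nbr_x nbr_X2)
      moreover have "w = Va" using w n_X2 by (auto simp: g_def nbr_a nbr_b nbr_c nbr_d nbr_e nbr_g nbr_h nbr_i nbr_x nbr_X2)
      ultimately show False using uw by simp
    qed
    have n_i: "Vi \<notin> set vs"
    proof
      assume "Vi \<in> set vs"
      from nbrs[OF this] obtain u w where uw: "u \<noteq> w" and u: "u \<in> set vs" "F_adj Vi u" "g u \<noteq> g Vi" and w: "w \<in> set vs" "F_adj Vi w" "g w \<noteq> g Vi" by blast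
      have "u = Vd" using u n_X2 n_h by (auto simp: g_def nbr_a nbr_b nbr_c nbr_d nbr_e nbr_g nbr_h nbr_i nbr_x nbr_X2)
      moreover have "w = Vd" using w n_X2 n_h by (auto simp: g_def nbr_a nbr_b nbr_c nbr_d nbr_e nbr_g nbr_h nbr_i nbr_x nbr_X2)
      ultimately show False using uw by simp
    qed
    have n_b: "Vb \<notin> set vs"
    proof
      assume "Vb \<in> set vs"
      from nbrs[OF this] obtain u w where uw: "u \<noteq> w" and u: "u \<in> set vs" "F_adj Vb u" "g u \<noteq> g Vb" and w: "w \<in> set vs" "F_adj Vb w" "g w \<noteq> g Vb" by blast
      have "u = Vg" using u n_X2 n_h n_i by (auto simp: g_def nbr_a nbr_b nbr_c nbr_d nbr_e nbr_g nbr_h nbr_i nbr_x nbr_X2)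
      moreover have "w = Vg" using w n_X2 n_h n_i by (auto simp: g_def nbr_a nbr_b nbr_c nbr_d nbr_e nbr_g nbr_h nbr_i nbr_x nbr_X2)
      ultimately show False using uw by simp
    qed
    have n_g: "Vg \<notin> set vs"
    proof
      assume "Vg \<in> set vs"
      from nbrs[OF this] obtain u w where uw: "u \<noteq> w" and u: "u \<in> set vs" "F_adj Vg u" "g u \<noteq> g Vg" and w: "w \<in> set vs" "F_adj Vg w" "g w \<noteq> g Vg" by blast
      have "u = Vc" using u n_X2 n_h n_i n_b by (auto simp: g_def nbr_a nbr_b nbr_c nbr_d nbr_e nbr_g nbr_h nbr_i nbr_x nbr_X2)
      moreover have "w = Vc" using w n_X2 n_h n_i n_b by (auto simp: g_def nbr_a nbr_b nbr_c nbr_d nbr_e nbr_g nbr_h nbr_i nbr_x nbr_X2)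
      ultimately show False using uw by simp
    qed
    have n_a: "Va \<notin> set vs"
    proof
      assume "Va \<in> set vs"
      from nbrs[OF this] obtain u w where uw: "u \<noteq> w" and u: "u \<in> set vs" "F_adj Va u" "g u \<noteq> g Va" and w: "w \<in> set vs" "F_adj Va w" "g w \<noteq> g Va" by blast
      have "u = Ve" using u n_X2 n_h n_i n_b n_g by (auto simp: g_def nbr_a nbr_b nbr_c nbr_d nbr_e nbr_g nbr_h nbr_i nbr_x nbr_X2)
      moreover have "w = Ve" using w n_X2 n_h n_i n_b n_g by (auto simp: g_def nbr_a nbr_b nbr_c nbr_d nbr_e nbr_g nbr_h nbr_i nbr_x nbr_X2)
      ultimately show False using uw by simp
    qed
    have n_d: "Vd \<notin> set vs"
    proof
      assume "Vd \<in> set vs"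
      from nbrs[OF this] obtain u w where uw: "u \<noteq> w" and u: "u \<in> set vs" "F_adj Vd u" "g u \<noteq> g Vd" and w: "w \<in> set vs" "F_adj Vd w" "g w \<noteq> g Vd" by blast
      have "u = Ve" using u n_X2 n_h n_i n_b n_g n_a by (auto simp: g_def nbr_a nbr_b nbr_c nbr_d nbr_e nbr_g nbr_h nbr_i nbr_x nbr_X2)
      moreover have "w = Ve" using w n_X2 n_h n_i n_b n_g n_a by (auto simp: g_def nbr_a nbr_b nbr_c nbr_d nbr_e nbr_g nbr_h nbr_i nbr_x nbr_X2)
      ultimately show False using uw by simp
    qed
    have n_c: "Vc \<notin> set vs"
    proof
      assume "Vc \<in> set vs"
      from nbrs[OF this] obtain u w where uw: "u \<noteq> w" and u: "u \<in> set vs" "F_adj Vc u" "g u \<noteq> g Vc" and w: "w \<in> set vs" "F_adj Vc w" "g w \<noteq> g Vc" by blast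
      have "u = Ve" using u n_X2 n_h n_i n_b n_g n_a n_d by (auto simp: g_def nbr_a nbr_b nbr_c nbr_d nbr_e nbr_g nbr_h nbr_i nbr_x nbr_X2)
      moreover have "w = Ve" using w n_X2 n_h n_i n_b n_g n_a n_d by (auto simp: g_def nbr_a nbr_b nbr_c nbr_d nbr_e nbr_g nbr_h nbr_i nbr_x nbr_X2)
      ultimately show False using uw by simp
    qed
    have n_e: "Ve \<notin> set vs"
    proof
      assume "Ve \<in> set vs"
      from nbrs[OF this] obtain u w where uw: "u \<noteq> w" and u: "u \<in> set vs" "F_adj Ve u" "g u \<noteq> g Ve" and w: "w \<in> set vs" "F_adj Ve w" "g w \<noteq> g Ve" by blast
      show False using u n_X2 n_h n_i n_b n_g n_a n_d n_c by (auto simp: g_def nbr_a nbr_b nbr_c nbr_d nbr_e nbr_g nbr_h nbr_i nbr_x nbr_X2)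
    qed
    have n_x: "Vx \<notin> set vs"
    proof
      assume "Vx \<in> set vs"
      from nbrs[OF this] obtain u w where uw: "u \<noteq> w" and u: "u \<in> set vs" "F_adj Vx u" "g u \<noteq> g Vx" and w: "w \<in> set vs" "F_adj Vx w" "g w \<noteq> g Vx" by blast
      show False using u n_X2 n_h n_i n_b n_g n_a n_d n_c n_e by (auto simp: g_def nbr_a nbr_b nbr_c nbr_d nbr_e nbr_g nbr_h nbr_i nbr_x nbr_X2)
    qed
    have "\<forall>v. v \<notin> set vs" using n_X2 n_h n_i n_b n_g n_a n_d n_c n_e n_x by (metis vtx.exhaust)
    moreover have "vs \<noteq> []" using bc by (auto simp: bichromatic_cycle_def is_cycle_def)
    ultimately show False by (metis list.set_intros(1) neq_Nil_conv)
  qed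
  show "acyclic_S3S3_colouring F_V F_adj g"
    unfolding acyclic_S3S3_colouring_def using cm dgall ac by blast
qed

lemma forall_part:
  assumes A: "acyclic_S3S3_colouring F_V F_adj f"
  shows "f Vx = f Vx' \<and> same_colour_deg F_V F_adj f Vx = 2 \<and> same_colour_deg F_V F_adj f Vx' = 1"
proof -
  have col: "\<And>v. f v = 1 \<or> f v = 2" using A inV by (auto simp: acyclic_S3S3_colouring_def colour_map_def)
  have dg: "\<And>v. same_colour_deg F_V F_adj f v \<le> 3" using A inV by (auto simp: acyclic_S3S3_colouring_def)
  have nb: "\<And>vs. \<not> bichromatic_cycle F_V F_adj f vs" using A by (auto simp: acyclic_S3S3_colouring_def)
  have c0: "f Vb = f Vd \<or> f Vd = f Ve \<or> f Ve = f Vc \<or> f Vc = f Vb"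
    by (rule cyc4[OF iscyc4[where V=F_V and adj=F_adj] nb[of "[Vb,Vd,Ve,Vc]"]]) (simp_all add: inV nbr_a nbr_b nbr_c nbr_d nbr_e nbr_g nbr_h nbr_i nbr_x nbr_X2)
  have c1: "f Va = f Ve \<or> f Ve = f Vd \<or> f Vd = f Vc \<or> f Vc = f Va"
    by (rule cyc4[OF iscyc4[where V=F_V and adj=F_adj] nb[of "[Va,Ve,Vd,Vc]"]]) (simp_all add: inV nbr_a nbr_b nbr_c nbr_d nbr_e nbr_g nbr_h nbr_i nbr_x nbr_X2)
  have c2: "f Va = f Vd \<or> f Vd = f Vc \<or> f Vc = f Vb \<or> f Vb = f Va"
    by (rule cyc4[OF iscyc4[where V=F_V and adj=F_adj] nb[of "[Va,Vd,Vc,Vb]"]]) (simp_all add: inV nbr_a nbr_b nbr_c nbr_d nbr_e nbr_g nbr_h nbr_i nbr_x nbr_X2)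
  have c3: "f Vb = f Vd \<or> f Vd = f Vc \<or> f Vc = f Vg \<or> f Vg = f Vb"
    by (rule cyc4[OF iscyc4[where V=F_V and adj=F_adj] nb[of "[Vb,Vd,Vc,Vg]"]]) (simp_all add: inV nbr_a nbr_b nbr_c nbr_d nbr_e nbr_g nbr_h nbr_i nbr_x nbr_X2)
  have c4: "f Va = f Vc \<or> f Vc = f Vg \<or> f Vg = f Vb \<or> f Vb = f Va"
    by (rule cyc4[OF iscyc4[where V=F_V and adj=F_adj] nb[of "[Va,Vc,Vg,Vb]"]]) (simp_all add: inV nbr_a nbr_b nbr_c nbr_d nbr_e nbr_g nbr_h nbr_i nbr_x nbr_X2)
  have c5: "f Va = f Vc \<or> f Vc = f Vb \<or> f Vb = f Vd \<or> f Vd = f Va"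
    by (rule cyc4[OF iscyc4[where V=F_V and adj=F_adj] nb[of "[Va,Vc,Vb,Vd]"]]) (simp_all add: inV nbr_a nbr_b nbr_c nbr_d nbr_e nbr_g nbr_h nbr_i nbr_x nbr_X2)
  have c6: "f Va = f Vc \<or> f Vc = f Vd \<or> f Vd = f Vb \<or> f Vb = f Va"
    by (rule cyc4[OF iscyc4[where V=F_V and adj=F_adj] nb[of "[Va,Vc,Vd,Vb]"]]) (simp_all add: inV nbr_a nbr_b nbr_c nbr_d nbr_e nbr_g nbr_h nbr_i nbr_x nbr_X2)
  have c7: "f Va = f Vd \<or> f Vd = f Ve \<or> f Ve = f Vc \<or> f Vc = f Va"
    by (rule cyc4[OF iscyc4[where V=F_V and adj=F_adj] nb[of "[Va,Vd,Ve,Vc]"]]) (simp_all add: inV nbr_a nbr_b nbr_c nbr_d nbr_e nbr_g nbr_h nbr_i nbr_x nbr_X2)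
  have c8: "f Va = f Vd \<or> f Vd = f Vc \<or> f Vc = f Ve \<or> f Ve = f Va"
    by (rule cyc4[OF iscyc4[where V=F_V and adj=F_adj] nb[of "[Va,Vd,Vc,Ve]"]]) (simp_all add: inV nbr_a nbr_b nbr_c nbr_d nbr_e nbr_g nbr_h nbr_i nbr_x nbr_X2)
  have c9: "f Vb = f Vc \<or> f Vc = f Ve \<or> f Ve = f Vg \<or> f Vg = f Vb"
    by (rule cyc4[OF iscyc4[where V=F_V and adj=F_adj] nb[of "[Vb,Vc,Ve,Vg]"]]) (simp_all add: inV nbr_a nbr_b nbr_c nbr_d nbr_e nbr_g nbr_h nbr_i nbr_x nbr_X2)
  have c10: "f Vx' = f Vb \<or> f Vb = f Vc \<or> f Vc = f Ve \<or> f Ve = f Vx'"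
    by (rule cyc4[OF iscyc4[where V=F_V and adj=F_adj] nb[of "[Vx',Vb,Vc,Ve]"]]) (simp_all add: inV nbr_a nbr_b nbr_c nbr_d nbr_e nbr_g nbr_h nbr_i nbr_x nbr_X2)
  have c11: "f Va = f Vh \<or> f Vh = f Vx \<or> f Vx = f Vi \<or> f Vi = f Vd \<or> f Vd = f Ve \<or> f Ve = f Va"
    by (rule cyc6[OF iscyc6[where V=F_V and adj=F_adj] nb[of "[Va,Vh,Vx,Vi,Vd,Ve]"]]) (simp_all add: inV nbr_a nbr_b nbr_c nbr_d nbr_e nbr_g nbr_h nbr_i nbr_x nbr_X2)
  have c12: "f Va = f Vb \<or> f Vb = f Vd \<or> f Vd = f Vi \<or> f Vi = f Vx \<or> f Vx = f Vh \<or> f Vh = f Va"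
    by (rule cyc6[OF iscyc6[where V=F_V and adj=F_adj] nb[of "[Va,Vb,Vd,Vi,Vx,Vh]"]]) (simp_all add: inV nbr_a nbr_b nbr_c nbr_d nbr_e nbr_g nbr_h nbr_i nbr_x nbr_X2)
  have d0: "\<not> (f Vb = f Va \<and> f Vc = f Va \<and> f Vd = f Va \<and> f Ve = f Va)"
    by (rule deg4[OF dg[of Va]]) (auto simp: F_V_def F_adj_def F_edges_def)
  have d1: "\<not> (f Vb = f Va \<and> f Vc = f Va \<and> f Vd = f Va \<and> f Vh = f Va)"
    by (rule deg4[OF dg[of Va]]) (auto simp: F_V_def F_adj_def F_edges_def)
  have d2: "\<not> (f Vb = f Va \<and> f Vc = f Va \<and> f Ve = f Va \<and> f Vh = f Va)"
    by (rule deg4[OF dg[of Va]]) (auto simp: F_V_def F_adj_def F_edges_def)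
  have d3: "\<not> (f Vb = f Va \<and> f Vd = f Va \<and> f Ve = f Va \<and> f Vh = f Va)"
    by (rule deg4[OF dg[of Va]]) (auto simp: F_V_def F_adj_def F_edges_def)
  have d4: "\<not> (f Vc = f Va \<and> f Vd = f Va \<and> f Ve = f Va \<and> f Vh = f Va)"
    by (rule deg4[OF dg[of Va]]) (auto simp: F_V_def F_adj_def F_edges_def)
  have d5: "\<not> (f Vx' = f Vb \<and> f Va = f Vb \<and> f Vc = f Vb \<and> f Vd = f Vb)"
    by (rule deg4[OF dg[of Vb]]) (auto simp: F_V_def F_adj_def F_edges_def)
  have d6: "\<not> (f Vx' = f Vb \<and> f Va = f Vb \<and> f Vc = f Vb \<and> f Vg = f Vb)"
    by (rule deg4[OF dg[of Vb]]) (auto simp: F_V_def F_adj_def F_edges_def)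
  have d7: "\<not> (f Vx' = f Vb \<and> f Va = f Vb \<and> f Vd = f Vb \<and> f Vg = f Vb)"
    by (rule deg4[OF dg[of Vb]]) (auto simp: F_V_def F_adj_def F_edges_def)
  have d8: "\<not> (f Vx' = f Vb \<and> f Vc = f Vb \<and> f Vd = f Vb \<and> f Vg = f Vb)"
    by (rule deg4[OF dg[of Vb]]) (auto simp: F_V_def F_adj_def F_edges_def)
  have d9: "\<not> (f Va = f Vb \<and> f Vc = f Vb \<and> f Vd = f Vb \<and> f Vg = f Vb)"
    by (rule deg4[OF dg[of Vb]]) (auto simp: F_V_def F_adj_def F_edges_def)
  have d10: "\<not> (f Va = f Vc \<and> f Vb = f Vc \<and> f Vd = f Vc \<and> f Ve = f Vc)"
    by (rule deg4[OF dg[of Vc]]) (auto simp: F_V_def F_adj_def F_edges_def)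
  have d11: "\<not> (f Va = f Vc \<and> f Vb = f Vc \<and> f Vd = f Vc \<and> f Vg = f Vc)"
    by (rule deg4[OF dg[of Vc]]) (auto simp: F_V_def F_adj_def F_edges_def)
  have d12: "\<not> (f Va = f Vc \<and> f Vb = f Vc \<and> f Ve = f Vc \<and> f Vg = f Vc)"
    by (rule deg4[OF dg[of Vc]]) (auto simp: F_V_def F_adj_def F_edges_def)
  have d13: "\<not> (f Va = f Vc \<and> f Vd = f Vc \<and> f Ve = f Vc \<and> f Vg = f Vc)"
    by (rule deg4[OF dg[of Vc]]) (auto simp: F_V_def F_adj_def F_edges_def)
  have d14: "\<not> (f Vb = f Vc \<and> f Vd = f Vc \<and> f Ve = f Vc \<and> f Vg = f Vc)"
    by (rule deg4[OF dg[of Vc]]) (auto simp: F_V_def F_adj_def F_edges_def)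
  have d15: "\<not> (f Va = f Vd \<and> f Vb = f Vd \<and> f Vc = f Vd \<and> f Ve = f Vd)"
    by (rule deg4[OF dg[of Vd]]) (auto simp: F_V_def F_adj_def F_edges_def)
  have d16: "\<not> (f Va = f Vd \<and> f Vb = f Vd \<and> f Vc = f Vd \<and> f Vi = f Vd)"
    by (rule deg4[OF dg[of Vd]]) (auto simp: F_V_def F_adj_def F_edges_def)
  have d17: "\<not> (f Va = f Vd \<and> f Vb = f Vd \<and> f Ve = f Vd \<and> f Vi = f Vd)"
    by (rule deg4[OF dg[of Vd]]) (auto simp: F_V_def F_adj_def F_edges_def)
  have d18: "\<not> (f Va = f Vd \<and> f Vc = f Vd \<and> f Ve = f Vd \<and> f Vi = f Vd)"
    by (rule deg4[OF dg[of Vd]]) (auto simp: F_V_def F_adj_def F_edges_def)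
  have d19: "\<not> (f Vb = f Vd \<and> f Vc = f Vd \<and> f Ve = f Vd \<and> f Vi = f Vd)"
    by (rule deg4[OF dg[of Vd]]) (auto simp: F_V_def F_adj_def F_edges_def)
  have d20: "\<not> (f Vx' = f Ve \<and> f Va = f Ve \<and> f Vc = f Ve \<and> f Vd = f Ve)"
    by (rule deg4[OF dg[of Ve]]) (auto simp: F_V_def F_adj_def F_edges_def)
  have d21: "\<not> (f Vx' = f Ve \<and> f Va = f Ve \<and> f Vc = f Ve \<and> f Vg = f Ve)"
    by (rule deg4[OF dg[of Ve]]) (auto simp: F_V_def F_adj_def F_edges_def)
  have d22: "\<not> (f Vx' = f Ve \<and> f Va = f Ve \<and> f Vd = f Ve \<and> f Vg = f Ve)"
    by (rule deg4[OF dg[of Ve]]) (auto simp: F_V_def F_adj_def F_edges_def)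
  have d23: "\<not> (f Vx' = f Ve \<and> f Vc = f Ve \<and> f Vd = f Ve \<and> f Vg = f Ve)"
    by (rule deg4[OF dg[of Ve]]) (auto simp: F_V_def F_adj_def F_edges_def)
  have d24: "\<not> (f Va = f Ve \<and> f Vc = f Ve \<and> f Vd = f Ve \<and> f Vg = f Ve)"
    by (rule deg4[OF dg[of Ve]]) (auto simp: F_V_def F_adj_def F_edges_def)
  have e: "\<And>u v. (f u = f v) = ((f u = 1) = (f v = 1))" using col by metis
  have k1: "f Vx = f Vx'" and k2: "f Vi = f Vx" and k3: "f Vh = f Vx" and k4: "(f Ve = f Vx') \<noteq> (f Vb = f Vx')"
    using c0 c1 c2 c3 c4 c5 c6 c7 c8 c9 c10 c11 c12 d0 d1 d2 d3 d4 d5 d6 d7 d8 d9 d10 d11 d12 d13 d14 d15 d16 d17 d18 d19 d20 d21 d22 d23 d24 unfolding e by sat+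
  have "{w \<in> F_V. F_adj Vx w \<and> f w = f Vx} = {Vi, Vh}"
    using k2 k3 by (auto simp: F_V_def nbr_a nbr_b nbr_c nbr_d nbr_e nbr_g nbr_h nbr_i nbr_x nbr_X2)
  then have s1: "same_colour_deg F_V F_adj f Vx = 2" by (simp add: same_colour_deg_def)
  have s2: "same_colour_deg F_V F_adj f Vx' = 1"
  proof (cases "f Ve = f Vx'")
    case True
    then have "{w \<in> F_V. F_adj Vx' w \<and> f w = f Vx'} = {Ve}"
      using k4 by (auto simp: F_V_def nbr_a nbr_b nbr_c nbr_d nbr_e nbr_g nbr_h nbr_i nbr_x nbr_X2)
    then show ?thesis by (simp add: same_colour_deg_def)
  next
    case False
    then have "{w \<in> F_V. F_adj Vx' w \<and> f w = f Vx'} = {Vb}"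
      using k4 by (auto simp: F_V_def nbr_a nbr_b nbr_c nbr_d nbr_e nbr_g nbr_h nbr_i nbr_x nbr_X2)
    then show ?thesis by (simp add: same_colour_deg_def)
  qed
  show ?thesis using k1 s1 s2 by simp
qed


theorem mainTheorem7:
  shows "(\<exists>f. acyclic_S3S3_colouring F_V F_adj f) \<and>
    (\<forall>f. acyclic_S3S3_colouring F_V F_adj f \<longrightarrow>
       f Vx = f Vx' \<and> same_colour_deg F_V F_adj f Vx = 2 \<and>
       same_colour_deg F_V F_adj f Vx' = 1)"
  using existence forall_part by blast

end
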